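(* Let $G$ be a graph, $R \subseteq V(G)$, $v_0\in V(G)$, and let $P$ be a shortest path from $v_0$ to $R$. Then for every milestone $v\in M_R(P)$, every vertex $u$ in the neutral prefix of $v$ in $P$, and every $y\in R$, it holds that $\mathrm{dist}(u,y)=|P[u,v]|+\mathrm{dist}(v,y)$.
   Context: $G$ is an unweighted undirected graph and $\mathrm{dist}$ is its shortest-path distance; $|Q|$ denotes the number of edges of a path $Q$ and $P[a,b]$ the subpath of $P$ between vertices $a,b$ of $P$. A shortest path from $v_0$ to $R$ is a path of length $\mathrm{dist}(v_0,R)=\min_{y\in R}\mathrm{dist}(v_0,y)$ from $v_0$ to a vertex of $R$; let $x$ be its unique vertex in $R$. Order $V(P)$ by $\le_P$: $v\le_P u$ iff $u\in V(P[v,x])$ (so the order goes from $v_0$ towards $x$). For $z\in V(G)$, the distance profile $\operatorname{prof}_{R,x}[z]\colon R\to\mathbb{Z}$ is $\operatorname{prof}_{R,x}[z](s)=\mathrm{dist}(z,s)-\mathrm{dist}(z,x)$. A vertex $v\in V(P)$ is a milestone of $P$ if $v=x$ or $\operatorname{prof}_{R,x}[v]\ne\operatorname{prof}_{R,x}[u]$ where $u$ is the successor of $v$ in $\le_P$; $M_R(P)$ is the set of milestones. For $v\in M_R(P)$, the neutral prefix of $v$ in $P$ is the vertex set of the maximal subpath $Q$ of $P[v_0,v]$ such that $v$ is the only milestone of $P$ belonging to $Q$. *)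

theory Defs
  imports "HOL-Library.Extended_Nat"
begin

definition graph :: "'a set \<Rightarrow> ('a \<Rightarrow> 'a \<Rightarrow> bool) \<Rightarrow> bool" where
  "graph V E \<longleftrightarrow> (\<forall>x y. E x y \<longrightarrow> x \<in> V \<and> y \<in> V) \<and> (\<forall>x y. E x y \<longrightarrow> E y x) \<and> (\<forall>x. \<not> E x x)"

text \<open>Walks as nonempty vertex lists; the number of edges is length - 1.\<close>
definition walk :: "'a set \<Rightarrow> ('a \<Rightarrow> 'a \<Rightarrow> bool) \<Rightarrow> 'a list \<Rightarrow> bool" where
  "walk V E xs \<longleftrightarrow> xs \<noteq> [] \<and> set xs \<subseteq> V \<and> (\<forall>i. Suc i < length xs \<longrightarrow> E (xs ! i) (xs ! Suc i))"

definition gpath :: "'a set \<Rightarrow> ('a \<Rightarrow> 'a \<Rightarrow> bool) \<Rightarrow> 'a list \<Rightarrow> bool" where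
  "gpath V E xs \<longleftrightarrow> walk V E xs \<and> distinct xs"

text \<open>Shortest-path distance (infinity if no walk exists).\<close>
definition dist :: "'a set \<Rightarrow> ('a \<Rightarrow> 'a \<Rightarrow> bool) \<Rightarrow> 'a \<Rightarrow> 'a \<Rightarrow> enat" where
  "dist V E a b = Inf {enat (length xs - 1) | xs. walk V E xs \<and> hd xs = a \<and> last xs = b}"

definition dist_set :: "'a set \<Rightarrow> ('a \<Rightarrow> 'a \<Rightarrow> bool) \<Rightarrow> 'a \<Rightarrow> 'a set \<Rightarrow> enat" where
  "dist_set V E a R = (INF y\<in>R. dist V E a y)"

definition shortest_path_to :: "'a set \<Rightarrow> ('a \<Rightarrow> 'a \<Rightarrow> bool) \<Rightarrow> 'a \<Rightarrow> 'a set \<Rightarrow> 'a list \<Rightarrow> bool" where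
  "shortest_path_to V E v0 R P \<longleftrightarrow> gpath V E P \<and> hd P = v0 \<and> last P \<in> R
     \<and> enat (length P - 1) = dist_set V E v0 R"

text \<open>Distance profile prof_{R,x}[z] : R \<rightarrow> int, represented as a partial function
 (None outside R; None also for targets at infinite distance).\<close>
definition prof :: "'a set \<Rightarrow> ('a \<Rightarrow> 'a \<Rightarrow> bool) \<Rightarrow> 'a set \<Rightarrow> 'a \<Rightarrow> 'a \<Rightarrow> 'a \<Rightarrow> int option" where
  "prof V E R x z = (\<lambda>s. if s \<in> R then
      (case (dist V E z s, dist V E z x) of
         (enat a, enat b) \<Rightarrow> Some (int a - int b)
       | _ \<Rightarrow> None)
     else None)"

definition milestone_idx :: "'a set \<Rightarrow> ('a \<Rightarrow> 'a \<Rightarrow> bool) \<Rightarrow> 'a set \<Rightarrow> 'a list \<Rightarrow> nat \<Rightarrow> bool" where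
  "milestone_idx V E R P i \<longleftrightarrow> i < length P \<and>
     (i = length P - 1 \<or> prof V E R (last P) (P ! i) \<noteq> prof V E R (last P) (P ! Suc i))"

definition milestones :: "'a set \<Rightarrow> ('a \<Rightarrow> 'a \<Rightarrow> bool) \<Rightarrow> 'a set \<Rightarrow> 'a list \<Rightarrow> 'a set" where
  "milestones V E R P = {P ! i | i. milestone_idx V E R P i}"

definition neutral_prefix :: "'a set \<Rightarrow> ('a \<Rightarrow> 'a \<Rightarrow> bool) \<Rightarrow> 'a set \<Rightarrow> 'a list \<Rightarrow> 'a \<Rightarrow> 'a set" where
  "neutral_prefix V E R P v = {P ! i | i. \<exists>j. j < length P \<and> P ! j = v \<and> i \<le> j \<and>
       (\<forall>k. i \<le> k \<and> k < j \<longrightarrow> \<not> milestone_idx V E R P k)}"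

text \<open>Position of a vertex on a (distinct) path, and |P[a,b]|, the number of edges
 of the subpath of P between its vertices a and b.\<close>
definition pos :: "'a list \<Rightarrow> 'a \<Rightarrow> nat" where
  "pos P a = (THE i. i < length P \<and> P ! i = a)"

definition subpath_len :: "'a list \<Rightarrow> 'a \<Rightarrow> 'a \<Rightarrow> nat" where
  "subpath_len P a b = (if pos P a \<le> pos P b then pos P b - pos P a else pos P a - pos P b)"

end

theory Submission
  imports Defs
begin

lemma dist_le:
  assumes "walk V E xs" shows "dist V E (hd xs) (last xs) \<le> enat (length xs - 1)"
  unfolding dist_def by (rule Inf_lower) (use assms in blast)

lemma dist_obtain:
  assumes "dist V E a b = enat m"
  shows "\<exists>xs. walk V E xs \<and> hd xs = a \<and> last xs = b \<and> length xs - 1 = m"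
proof -
  let ?S = "{enat (length xs - 1) | xs. walk V E xs \<and> hd xs = a \<and> last xs = b}"
  have ne: "?S \<noteq> {}"
  proof
    assume "?S = {}"
    then have "dist V E a b = \<infinity>" unfolding dist_def by (metis Inf_empty top_enat_def)
    then show False using assms by simp
  qed
  have "Inf ?S \<in> ?S" unfolding Inf_enat_def using ne by (auto intro: LeastI)
  then show ?thesis using assms unfolding dist_def by auto
qed

lemma walk_Cons: "walk V E (a # xs) \<longleftrightarrow> a \<in> V \<and> (xs = [] \<or> (E a (hd xs) \<and> walk V E xs))"
proof
  assume w: "walk V E (a # xs)"
  show "a \<in> V \<and> (xs = [] \<or> (E a (hd xs) \<and> walk V E xs))"
  proof (cases xs)
    case Nil then show ?thesis using w by (auto simp: walk_def)
  next
    case (Cons b ys)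
    have "E a b" using w Cons unfolding walk_def by (metis Suc_less_eq length_Cons nth_Cons_0 nth_Cons_Suc zero_less_Suc)
    moreover have "walk V E xs"
    proof -
    have "\<forall>i. Suc i < length xs \<longrightarrow> E (xs ! i) (xs ! Suc i)"
    proof (intro allI impI)
      fix i assume "Suc i < length xs"
      then have "E ((a#xs) ! Suc i) ((a#xs) ! Suc (Suc i))" using w unfolding walk_def by auto
      then show "E (xs ! i) (xs ! Suc i)" by simp
    qed
    then show "walk V E xs" using w Cons unfolding walk_def by auto
    qed
    ultimately show ?thesis using w Cons by (auto simp: walk_def)
  qed
next
  assume h: "a \<in> V \<and> (xs = [] \<or> (E a (hd xs) \<and> walk V E xs))"
  show "walk V E (a # xs)"
  proof (cases xs)
    case Nil then show ?thesis using h by (auto simp: walk_def)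
  next
    case (Cons b ys)
    show ?thesis using h Cons unfolding walk_def
      apply auto
      subgoal for i by (cases i) auto
      done
  qed
qed

lemma walk_append:
  assumes "walk V E xs" "walk V E ys" "last xs = hd ys"
  shows "walk V E (xs @ tl ys)"
  using assms
proof (induction xs)
  case Nil then show ?case by (simp add: walk_def)
next
  case (Cons a xs)
  show ?case
  proof (cases xs)
    case Nil
    then show ?thesis using Cons.prems by (cases ys) (auto simp: walk_Cons)
  next
    case (Cons b zs)
    then show ?thesis using Cons.prems Cons.IH by (auto simp: walk_Cons)
  qed
qed

lemma walk_rev:
  assumes "graph V E" "walk V E xs" shows "walk V E (rev xs)"
  using assms unfolding walk_def graph_def
  apply (auto simp: rev_nth)
  subgoal for i
  proof -
    assume a: "\<forall>x y. E x y \<longrightarrow> E y x" "\<forall>i. Suc i < length xs \<longrightarrow> E (xs ! i) (xs ! Suc i)" "Suc i < length xs"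
    define m where "m = length xs - Suc (Suc i)"
    have m: "length xs - Suc i = Suc m" "Suc m < length xs" using a(3) unfolding m_def by auto
    show ?thesis using a(1) a(2) m by (simp add: m_def[symmetric])
  qed
  done

lemma dist_tri:
  assumes "graph V E" shows "dist V E a c \<le> dist V E a b + dist V E b c"
proof (cases "dist V E a b")
  case (enat m)
  show ?thesis
  proof (cases "dist V E b c")
    case (enat k)
    obtain xs where xs: "walk V E xs" "hd xs = a" "last xs = b" "length xs - 1 = m"
      using dist_obtain[OF \<open>dist V E a b = enat m\<close>] by blast
    obtain ys where ys: "walk V E ys" "hd ys = b" "last ys = c" "length ys - 1 = k"
      using dist_obtain[OF \<open>dist V E b c = enat k\<close>] by blast
    have w: "walk V E (xs @ tl ys)" using walk_append[OF xs(1) ys(1)] xs(3) ys(2) by simp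
    have ne: "xs \<noteq> []" "ys \<noteq> []" using xs ys by (auto simp: walk_def)
    have "hd (xs @ tl ys) = a" using xs ne by simp
    moreover have "last (xs @ tl ys) = c"
    proof (cases ys)
      case Nil then show ?thesis using ne by simp
    next
      case (Cons z zs)
      then show ?thesis using xs ys by (cases zs) auto
    qed
    moreover have "length (xs @ tl ys) - 1 = m + k" using xs ys ne by (cases ys; cases xs) auto
    ultimately show ?thesis using dist_le[OF w] \<open>dist V E a b = enat m\<close> enat by simp
  qed simp
qed simp

lemma walk_seg:
  assumes "walk V E xs" "i \<le> j" "j < length xs"
  shows "walk V E (drop i (take (Suc j) xs))"
proof -
  have "set (drop i (take (Suc j) xs)) \<subseteq> set xs"
    by (meson order_trans set_drop_subset set_take_subset)
  moreover have "drop i (take (Suc j) xs) \<noteq> []" using assms by simp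
  moreover have "\<forall>k. Suc k < length (drop i (take (Suc j) xs)) \<longrightarrow>
     E (drop i (take (Suc j) xs) ! k) (drop i (take (Suc j) xs) ! Suc k)"
  proof (intro allI impI)
    fix k assume k: "Suc k < length (drop i (take (Suc j) xs))"
    then have k2: "Suc (i + k) < length xs" "i + Suc k < Suc j" using assms by auto
    have "E (xs ! (i+k)) (xs ! Suc (i+k))" using assms(1) k2(1) unfolding walk_def by blast
    then show "E (drop i (take (Suc j) xs) ! k) (drop i (take (Suc j) xs) ! Suc k)"
      using k2 assms by (simp add: nth_take)
  qed
  ultimately show ?thesis using assms(1) unfolding walk_def by blast
qed

lemma dist_seg:
  assumes "walk V E xs" "i \<le> j" "j < length xs"
  shows "dist V E (xs ! i) (xs ! j) \<le> enat (j - i)"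
proof -
  let ?s = "drop i (take (Suc j) xs)"
  have w: "walk V E ?s" by (rule walk_seg[OF assms])
  have l: "length ?s = Suc j - i" using assms by simp
  have "hd ?s = xs ! i" using assms by (simp add: hd_drop_conv_nth)
  moreover have "last ?s = xs ! j"
  proof -
    have "?s \<noteq> []" using l assms by auto
    then have "last ?s = ?s ! (j - i)" using l by (simp add: last_conv_nth)
    also have "\<dots> = xs ! j" using assms by simp
    finally show ?thesis .
  qed
  ultimately show ?thesis using dist_le[OF w] l assms by simp
qed

lemma dist_seg_rev:
  assumes "graph V E" "walk V E xs" "i \<le> j" "j < length xs"
  shows "dist V E (xs ! j) (xs ! i) \<le> enat (j - i)"
proof -
  let ?s = "drop i (take (Suc j) xs)"
  have w: "walk V E (rev ?s)" by (rule walk_rev[OF assms(1) walk_seg[OF assms(2-4)]])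
  have l: "length ?s = Suc j - i" using assms by simp
  have "hd ?s = xs ! i" using assms by (simp add: hd_drop_conv_nth)
  moreover have "last ?s = xs ! j"
  proof -
    have "?s \<noteq> []" using l assms by auto
    then have "last ?s = ?s ! (j - i)" using l by (simp add: last_conv_nth)
    also have "\<dots> = xs ! j" using assms by simp
    finally show ?thesis .
  qed
  moreover have "?s \<noteq> []" using l assms by auto
  ultimately show ?thesis using dist_le[OF w] l assms by (simp add: hd_rev last_rev)
qed

lemma pos_nth: "distinct P \<Longrightarrow> i < length P \<Longrightarrow> pos P (P ! i) = i"
  unfolding pos_def by (rule the_equality) (auto simp: nth_eq_iff_index_eq)

theorem lemma3p1:
  fixes V :: "'a set" and E :: "'a \<Rightarrow> 'a \<Rightarrow> bool" and R :: "'a set"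
    and v0 :: 'a and P :: "'a list" and v u y :: 'a
  assumes "graph V E" and "R \<subseteq> V" and "v0 \<in> V"
    and "shortest_path_to V E v0 R P"
    and "v \<in> milestones V E R P"
    and "u \<in> neutral_prefix V E R P v"
    and "y \<in> R"
  shows "dist V E u y
           = enat (subpath_len P u v) + dist V E v y"
proof -
  from assms(4) have gp: "gpath V E P" "hd P = v0" "last P \<in> R"
    "enat (length P - 1) = dist_set V E v0 R" by (auto simp: shortest_path_to_def)
  have wP: "walk V E P" "distinct P" using gp by (auto simp: gpath_def)
  have ne: "P \<noteq> []" using wP by (simp add: walk_def)
  define n where "n = length P - 1"
  have ln: "n < length P" using ne unfolding n_def by (cases P) auto
  have lastP: "last P = P ! n" using ne unfolding n_def by (simp add: last_conv_nth)
  have hd0: "P ! 0 = v0" using ne gp(2) by (simp add: hd_conv_nth)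
  obtain i j where ij: "u = P!i" "j < length P" "P!j = v" "i \<le> j"
    "\<forall>k. i \<le> k \<and> k < j \<longrightarrow> \<not> milestone_idx V E R P k"
    using assms(6) unfolding neutral_prefix_def by blast
  have jn: "j \<le> n" using ij(2) unfolding n_def by simp
  have sl: "subpath_len P u v = j - i"
    using pos_nth[OF wP(2)] ij jn ln unfolding subpath_len_def by auto
  have dx: "dist V E (P!k) (last P) = enat (n-k)" if k: "k \<le> n" for k
  proof -
    have up: "dist V E (P!k) (last P) \<le> enat (n-k)" using dist_seg[OF wP(1) k ln] lastP by simp
    have "dist_set V E v0 R \<le> dist V E v0 (last P)" unfolding dist_set_def
      by (rule INF_lower) (rule gp(3))
    also have "\<dots> \<le> dist V E v0 (P!k) + dist V E (P!k) (last P)" by (rule dist_tri[OF assms(1)])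
    also have "\<dots> \<le> enat k + dist V E (P!k) (last P)"
      using dist_seg[OF wP(1), of 0 k] k ln hd0 by (intro add_right_mono) simp
    finally have lo: "enat n \<le> enat k + dist V E (P!k) (last P)" using gp(4) n_def by simp
    from up obtain m where m: "dist V E (P!k) (last P) = enat m" "m \<le> n - k"
      by (cases "dist V E (P!k) (last P)") auto
    then show ?thesis using lo by simp
  qed
  have pstep: "\<forall>m. i + m \<le> j \<longrightarrow> prof V E R (last P) (P!i) = prof V E R (last P) (P!(i+m))"
  proof
    fix m show "i + m \<le> j \<longrightarrow> prof V E R (last P) (P!i) = prof V E R (last P) (P!(i+m))"
    proof (induction m)
      case 0 then show ?case by simp
    next
      case (Suc m)
      show ?case
      proof
        assume a: "i + Suc m \<le> j"
        then have "\<not> milestone_idx V E R P (i+m)" using ij(5) by auto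
        moreover have "i + m < length P" "i + m \<noteq> length P - 1" using a jn ln n_def by auto
        ultimately have "prof V E R (last P) (P!(i+m)) = prof V E R (last P) (P!Suc (i+m))"
          unfolding milestone_idx_def by blast
        then show "prof V E R (last P) (P!i) = prof V E R (last P) (P!(i+Suc m))"
          using Suc a by simp
      qed
    qed
  qed
  have pe: "prof V E R (last P) u = prof V E R (last P) v"
    using pstep[rule_format, of "j - i"] ij by simp
  have tri1: "dist V E u y \<le> enat (j-i) + dist V E v y"
    using dist_tri[OF assms(1), of u y v] dist_seg[OF wP(1) ij(4) ij(2)] ij
    by (metis add_right_mono order_trans)
  have tri2: "dist V E v y \<le> enat (j-i) + dist V E u y"
    using dist_tri[OF assms(1), of v y u] dist_seg_rev[OF assms(1) wP(1) ij(4) ij(2)] ij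
    by (metis add_right_mono order_trans)
  show ?thesis
  proof (cases "dist V E v y")
    case infinity
    then have "dist V E u y = \<infinity>" using tri2 by (cases "dist V E u y") auto
    then show ?thesis using infinity by simp
  next
    case (enat b)
    then obtain a where a: "dist V E u y = enat a" using tri1 by (cases "dist V E u y") auto
    have du: "dist V E u (last P) = enat (n - i)" using dx[of i] ij jn by simp
    have dv: "dist V E v (last P) = enat (n - j)" using dx[of j] ij jn by simp
    have "prof V E R (last P) u y = Some (int a - int (n - i))"
      using a du assms(7) unfolding prof_def by simp
    moreover have "prof V E R (last P) v y = Some (int b - int (n - j))"
      using enat dv assms(7) unfolding prof_def by simp
    ultimately have "int a - int (n - i) = int b - int (n - j)" using pe by simp
    then have "a = (j - i) + b" using ij(4) jn by linarith
    then show ?thesis using a enat sl by simp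
  qed
qed

end
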